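(* Let $g\in\mathcal G^{\mathrm{dyad}}$. (1) For $d\ge\deg(g)$ and a permutation $\pi$ of $\{1,\dots,2^d\}$ with $g=g_\pi$, the map $T_g:\mathcal H^{X,d}\to\mathcal H^{X,d}$, $T_gf(X_{I^d_1},\dots,X_{I^d_{2^d}}):=f(X_{I^d_{\pi(1)}},\dots,X_{I^d_{\pi(2^d)}})$, is well defined: if $f_1(X_{I^d_1},\dots,X_{I^d_{2^d}})=f_2(X_{I^d_1},\dots,X_{I^d_{2^d}})$ a.s., then $f_1(X_{I^d_{\pi(1)}},\dots)=f_2(X_{I^d_{\pi(1)}},\dots)$ a.s. (2) For $e\ge d\ge\deg(g)$ and $g=g_{\pi_e}=g_{\pi_d}$ with $\pi_e,\pi_d$ permutations of $\{1,\dots,2^e\}$, $\{1,\dots,2^d\}$ respectively, the restriction of $T_{g_{\pi_e}}$ (defined on $\mathcal H^{X,e}$) to $\mathcal H^{X,d}$ equals $T_{g_{\pi_d}}$. (3) For $F\in\mathcal H^{X,d}$ with $d\ge\deg(g)$, $F$ and $T_gF$ have the same distribution; in particular $T_g$ is a linear isometry with respect to the $L_2(\mathcal F^X)$-norm.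
   Context: $X=(X_t)_{t\in[0,1]}$ is a Lévy process with càdlàg paths and $X_0\equiv0$ on a complete probability space; $\mathcal F^X$ is $\sigma(X_t:t\in[0,1])$ augmented by null sets; $X_{(a,b]}:=X_b-X_a$. Dyadic intervals $I^d_k=((k-1)2^{-d},k2^{-d}]$. $\mathcal H^{X,d}=\{f(X_{I^d_1},\dots,X_{I^d_{2^d}}):f\text{ bounded continuous on }\mathbb R^{2^d}\}\subseteq L_2(\mathcal F^X)$ (as a.s.-equivalence classes). For a permutation $\pi$ of $\{1,\dots,2^d\}$, $g_\pi:(0,1]\to(0,1]$ is $g_\pi(t)=\pi(k)2^{-d}-(k2^{-d}-t)$ for $t\in I^d_k$; $\mathcal G^{\mathrm{dyad}}$ is the set of all $g_\pi$, $d\ge0$; $\deg(g)$ is the least $d$ such that $g=g_\pi$ for some permutation $\pi$ of $\{1,\dots,2^d\}$. *)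

theory Defs
  imports "HOL-Probability.Probability"
begin

definition measure_complete :: "'a measure \<Rightarrow> bool" where
  "measure_complete M \<longleftrightarrow> (\<forall>A B. A \<in> null_sets M \<longrightarrow> B \<subseteq> A \<longrightarrow> B \<in> sets M)"

text \<open>A real-valued Levy process on [0,1] with cadlag paths and X_0 = 0 (values of X t
  for t outside [0,1] are irrelevant).\<close>
definition levy_process :: "'a measure \<Rightarrow> (real \<Rightarrow> 'a \<Rightarrow> real) \<Rightarrow> bool" where
  "levy_process M X \<longleftrightarrow>
     prob_space M \<and>
     (\<forall>t\<in>{0..1}. X t \<in> borel_measurable M) \<and>
     (\<forall>\<omega>\<in>space M. X 0 \<omega> = 0) \<and>
     (\<forall>\<omega>\<in>space M. (\<forall>t\<in>{0..<1}. ((\<lambda>s. X s \<omega>) \<longlongrightarrow> X t \<omega>) (at_right t)) \<and>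
                   (\<forall>t\<in>{0<..1}. \<exists>l. ((\<lambda>s. X s \<omega>) \<longlongrightarrow> l) (at_left t))) \<and>
     (\<forall>(n::nat) (t::nat \<Rightarrow> real). (\<forall>i\<le>n. t i \<in> {0..1}) \<longrightarrow> (\<forall>i<n. t i < t (Suc i)) \<longrightarrow>
         prob_space.indep_vars M (\<lambda>_. borel) (\<lambda>i \<omega>. X (t (Suc i)) \<omega> - X (t i) \<omega>) {..<n}) \<and>
     (\<forall>s t. 0 \<le> s \<longrightarrow> s \<le> t \<longrightarrow> t \<le> 1 \<longrightarrow>
         distr M borel (\<lambda>\<omega>. X t \<omega> - X s \<omega>) = distr M borel (X (t - s))) \<and>
     (\<forall>t\<in>{0..1}. \<forall>e>0. ((\<lambda>s. measure M {\<omega>\<in>space M. \<bar>X s \<omega> - X t \<omega>\<bar> > e}) \<longlongrightarrow> 0)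
         (at t within {0..1}))"

text \<open>R^(2^d) is represented as the subspace of nat \<Rightarrow> real (product topology) of vectors
  supported on the index set {1..2^d}.\<close>
definition dyad_dom :: "nat \<Rightarrow> (nat \<Rightarrow> real) set" where
  "dyad_dom d = {x. \<forall>i. i \<notin> {1..2^d} \<longrightarrow> x i = 0}"

definition bcont :: "nat \<Rightarrow> ((nat \<Rightarrow> real) \<Rightarrow> real) \<Rightarrow> bool" where
  "bcont d f \<longleftrightarrow> continuous_on (dyad_dom d) f \<and> bounded (f ` dyad_dom d)"

definition dyad_incr :: "(real \<Rightarrow> 'a \<Rightarrow> real) \<Rightarrow> nat \<Rightarrow> 'a \<Rightarrow> nat \<Rightarrow> real" where
  "dyad_incr X d \<omega> = (\<lambda>k. if k \<in> {1..2^d}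
      then X (real k / 2^d) \<omega> - X ((real k - 1) / 2^d) \<omega> else 0)"

text \<open>The dyadic interval-exchange map g_pi on (0,1]; extended by the identity outside (0,1]
  so that equality of such maps as HOL functions is equality on (0,1].\<close>
definition g_perm :: "nat \<Rightarrow> (nat \<Rightarrow> nat) \<Rightarrow> real \<Rightarrow> real" where
  "g_perm d \<pi> t = (if t \<in> {0<..1} then
      (let k = nat \<lceil>t * 2^d\<rceil> in real (\<pi> k) / 2^d - (real k / 2^d - t)) else t)"

definition G_dyad :: "(real \<Rightarrow> real) set" where
  "G_dyad = {g. \<exists>d \<pi>. \<pi> permutes {1..(2::nat)^d} \<and> g = g_perm d \<pi>}"

definition deg :: "(real \<Rightarrow> real) \<Rightarrow> nat" where
  "deg g = (LEAST d. \<exists>\<pi>. \<pi> permutes {1..(2::nat)^d} \<and> g = g_perm d \<pi>)"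

end

theory Submission imports Defs begin

lemma (in prob_space) indep_sets_reindex:
  assumes inj: "inj_on h J" and ind: "indep_sets F (h ` J)"
  shows "indep_sets (\<lambda>j. F (h j)) J"
  unfolding indep_sets_def
proof (intro conjI ballI allI impI)
  fix j assume "j \<in> J" then show "F (h j) \<subseteq> events" using ind by (auto simp: indep_sets_def)
next
  fix K A assume K: "K \<subseteq> J" "K \<noteq> {}" "finite K" and A: "A \<in> Pi K (\<lambda>j. F (h j))"
  define A' where "A' i = A (the_inv_into K h i)" for i
  have injK: "inj_on h K" using inj K by (meson inj_on_subset)
  have A'h: "A' (h j) = A j" if "j \<in> K" for j
    using that injK by (simp add: A'_def the_inv_into_f_f)
  have "A' \<in> Pi (h ` K) F" using A A'h by auto
  moreover have "h ` K \<subseteq> h ` J" "h ` K \<noteq> {}" "finite (h ` K)" using K by auto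
  ultimately have *: "prob (\<Inter>i\<in>h ` K. A' i) = (\<Prod>i\<in>h ` K. prob (A' i))"
    using ind unfolding indep_sets_def by blast
  have "(\<Inter>i\<in>h ` K. A' i) = (\<Inter>j\<in>K. A j)" using A'h by auto
  moreover have "(\<Prod>i\<in>h ` K. prob (A' i)) = (\<Prod>j\<in>K. prob (A j))"
    using injK A'h by (simp add: prod.reindex)
  ultimately show "prob (\<Inter>j\<in>K. A j) = (\<Prod>j\<in>K. prob (A j))" using * by simp
qed

lemma (in prob_space) indep_vars_reindex:
  assumes inj: "inj_on h J" and ind: "indep_vars M' X (h ` J)"
  shows "indep_vars (\<lambda>j. M' (h j)) (\<lambda>j. X (h j)) J"
  using ind indep_sets_reindex[OF inj, of "\<lambda>i. { X i -` A \<inter> space M | A. A \<in> sets (M' i)}"]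
  unfolding indep_vars_def2 by auto


definition dinc :: "(real \<Rightarrow> 'a \<Rightarrow> real) \<Rightarrow> nat \<Rightarrow> nat \<Rightarrow> 'a \<Rightarrow> real" where
  "dinc X d k \<omega> = X (real k / 2^d) \<omega> - X ((real k - 1) / 2^d) \<omega>"

lemma dinc_meas:
  assumes levy: "levy_process M X" and k: "k \<in> {1..(2::nat)^d}"
  shows "dinc X d k \<in> borel_measurable M"
proof -
  have m: "\<forall>t\<in>{0..1}. X t \<in> borel_measurable M" using levy by (simp add: levy_process_def)
  have kle: "real k \<le> 2^d" using k by (metis atLeastAtMost_iff of_nat_le_iff of_nat_numeral of_nat_power)
  have k1: "real k \<ge> 1" using k by auto
  have p: "(0::real) < 2^d" by simp
  have "real k / 2^d \<le> 1" by (subst divide_le_eq_1_pos[OF p]) (use kle in linarith)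
  moreover have "(real k - 1) / 2^d \<le> 1" by (subst divide_le_eq_1_pos[OF p]) (use kle in linarith)
  moreover have "0 \<le> real k / 2^d" "0 \<le> (real k - 1) / 2^d" using k1 p by simp_all
  ultimately
  have "real k / 2^d \<in> {0..1}" "(real k - 1) / 2^d \<in> {0..1}" by auto
  with m show ?thesis unfolding dinc_def by (intro borel_measurable_diff) auto
qed

lemma dinc_distr:
  assumes levy: "levy_process M X" and k: "k \<in> {1..(2::nat)^d}"
  shows "distr M borel (dinc X d k) = distr M borel (X (1 / 2^d))"
proof -
  have st: "\<forall>s t. 0 \<le> s \<longrightarrow> s \<le> t \<longrightarrow> t \<le> 1 \<longrightarrow>
         distr M borel (\<lambda>\<omega>. X t \<omega> - X s \<omega>) = distr M borel (X (t - s))"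
    using levy by (simp add: levy_process_def)
  have "real k \<le> 2^d" using k by (metis atLeastAtMost_iff of_nat_le_iff of_nat_numeral of_nat_power)
  then have a: "real k / 2^d \<le> 1" "0 \<le> (real k - 1) / 2^d" "(real k - 1) / 2^d \<le> real k / 2^d"
    using k by (auto simp: field_simps)
  have b: "real k / 2^d - (real k - 1) / 2^d = 1 / (2::real)^d" by (simp add: field_simps)
  show ?thesis using st[rule_format, OF a(2) a(3) a(1)] unfolding dinc_def b .
qed

lemma dinc_indep:
  assumes levy: "levy_process M X" and \<pi>: "\<pi> permutes {1..(2::nat)^d}"
  shows "prob_space.indep_vars M (\<lambda>_. borel) (\<lambda>k. dinc X d (\<pi> k)) {1..(2::nat)^d}"
proof -
  interpret prob_space M using levy by (simp add: levy_process_def)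
  have ind: "\<forall>(n::nat) (t::nat \<Rightarrow> real). (\<forall>i\<le>n. t i \<in> {0..1}) \<longrightarrow> (\<forall>i<n. t i < t (Suc i)) \<longrightarrow>
         indep_vars (\<lambda>_. borel) (\<lambda>i \<omega>. X (t (Suc i)) \<omega> - X (t i) \<omega>) {..<n}"
    using levy by (simp add: levy_process_def)
  have "\<forall>i\<le>2^d. real i / 2^d \<in> {0..(1::real)}"
    by (auto simp: field_simps)
  moreover have "\<forall>i<(2::nat)^d. real i / 2^d < real (Suc i) / (2::real)^d"
    by (auto simp: field_simps)
  ultimately have I0: "indep_vars (\<lambda>_. borel) (\<lambda>i \<omega>. X (real (Suc i) / 2^d) \<omega> - X (real i / 2^d) \<omega>) {..<2^d}"
    using ind[rule_format, of "2^d" "\<lambda>i. real i / 2^d"] by blast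
  let ?h = "\<lambda>k. \<pi> k - 1"
  have inj: "inj_on ?h {1..2^d}"
  proof (rule inj_onI)
    fix x y assume "x \<in> {1..(2::nat)^d}" "y \<in> {1..(2::nat)^d}" "\<pi> x - 1 = \<pi> y - 1"
    moreover have "\<pi> x \<in> {1..2^d}" "\<pi> y \<in> {1..2^d}" using calculation(1,2) permutes_in_image[OF \<pi>] by auto
    ultimately have "\<pi> x = \<pi> y" by auto
    then show "x = y" using permutes_inj[OF \<pi>] by (auto dest: injD)
  qed
  have "?h ` {1..2^d} = (\<lambda>k. k - 1) ` (\<pi> ` {1..2^d})" by auto
  also have "\<dots> = (\<lambda>k. k - 1) ` {1..2^d}" using permutes_image[OF \<pi>] by simp
  also have "\<dots> = {..<(2::nat)^d}"
  proof (rule set_eqI, rule iffI)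
    fix x assume "x \<in> {..<(2::nat)^d}" then show "x \<in> (\<lambda>k. k - 1) ` {1..2^d}"
      by (intro image_eqI[of _ _ "x+1"]) auto
  qed auto
  finally have img: "?h ` {1..2^d} = {..<(2::nat)^d}" .
  have I1: "indep_vars (\<lambda>_. borel) (\<lambda>k \<omega>. X (real (Suc (?h k)) / 2^d) \<omega> - X (real (?h k) / 2^d) \<omega>) {1..2^d}"
    using indep_vars_reindex[OF inj, of "\<lambda>_. borel"] I0 img by simp
  show ?thesis
  proof (rule iffD1[OF indep_vars_cong I1])
    fix k assume k: "k \<in> {1..(2::nat)^d}"
    then have "\<pi> k \<in> {1..2^d}" using permutes_in_image[OF \<pi>] by auto
    then have "real (Suc (\<pi> k - 1)) = real (\<pi> k)" "real (\<pi> k - 1) = real (\<pi> k) - 1" by auto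
    then show "(\<lambda>\<omega>. X (real (Suc (?h k)) / 2^d) \<omega> - X (real (?h k) / 2^d) \<omega>) = dinc X d (\<pi> k)"
      by (simp add: dinc_def fun_eq_iff)
  qed auto
qed


definition ext_dom :: "nat \<Rightarrow> (nat \<Rightarrow> real) \<Rightarrow> nat \<Rightarrow> real" where
  "ext_dom d x = (\<lambda>i. if i \<in> {1..(2::nat)^d} then x i else 0)"

lemma ext_dom_meas:
  assumes "sets N = sets borel"
  shows "ext_dom d \<in> borel_measurable (Pi\<^sub>M {1..(2::nat)^d} (\<lambda>_. N))"
proof (rule measurable_coordinatewise_then_product)
  fix i
  show "(\<lambda>x. ext_dom d x i) \<in> borel_measurable (Pi\<^sub>M {1..(2::nat)^d} (\<lambda>_. N))"
  proof (cases "i \<in> {1..(2::nat)^d}")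
    case True
    have "(\<lambda>x. x i) \<in> measurable (Pi\<^sub>M {1..(2::nat)^d} (\<lambda>_. N)) N"
      by (rule measurable_component_singleton[OF True])
    then have "(\<lambda>x. x i) \<in> borel_measurable (Pi\<^sub>M {1..(2::nat)^d} (\<lambda>_. N))"
      using measurable_cong_sets[OF refl assms] by blast
    then show ?thesis using True by (simp add: ext_dom_def)
  next
    case False
    then have "(\<lambda>x. ext_dom d x i) = (\<lambda>_. 0)" by (auto simp: ext_dom_def fun_eq_iff)
    then show ?thesis by simp
  qed
qed

lemma dyad_law:
  assumes levy: "levy_process M X" and \<pi>: "\<pi> permutes {1..(2::nat)^d}"
  shows "(\<lambda>\<omega> k. dyad_incr X d \<omega> (\<pi> k)) \<in> borel_measurable M"
    "distr M borel (\<lambda>\<omega> k. dyad_incr X d \<omega> (\<pi> k)) =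
       distr (Pi\<^sub>M {1..(2::nat)^d} (\<lambda>_. distr M borel (X (1 / 2^d)))) borel (ext_dom d)"
proof -
  interpret prob_space M using levy by (simp add: levy_process_def)
  let ?I = "{1..(2::nat)^d}"
  define V where "V k = (if k \<in> ?I then dinc X d (\<pi> k) else (\<lambda>_. 0))" for k
  have pin: "\<pi> k \<in> ?I \<longleftrightarrow> k \<in> ?I" for k using permutes_in_image[OF \<pi>] by simp
  have rv: "random_variable borel (V k)" for k
    using dinc_meas[OF levy] pin by (simp add: V_def)
  have "indep_vars (\<lambda>_. borel) V ?I \<longleftrightarrow> indep_vars (\<lambda>_. borel) (\<lambda>k. dinc X d (\<pi> k)) ?I"
    by (rule indep_vars_cong) (auto simp: V_def)
  then have "indep_vars (\<lambda>_. borel) V ?I" using dinc_indep[OF levy \<pi>] by simp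
  then have D: "distr M (Pi\<^sub>M ?I (\<lambda>_. borel)) (\<lambda>x. \<lambda>i\<in>?I. V i x) = (Pi\<^sub>M ?I (\<lambda>i. distr M borel (V i)))"
    using indep_vars_iff_distr_eq_PiM[of ?I V "\<lambda>_. borel"] rv by simp
  also have "\<dots> = Pi\<^sub>M ?I (\<lambda>_. distr M borel (X (1 / 2^d)))"
  proof (rule PiM_cong)
    fix x assume "x \<in> ?I"
    then have "\<pi> x \<in> ?I" using pin by simp
    then show "distr M borel (V x) = distr M borel (X (1 / 2^d))"
      using \<open>x \<in> ?I\<close> by (simp add: V_def dinc_distr[OF levy])
  qed simp
  finally have D': "distr M (Pi\<^sub>M ?I (\<lambda>_. borel)) (\<lambda>x. \<lambda>i\<in>?I. V i x) = Pi\<^sub>M ?I (\<lambda>_. distr M borel (X (1 / 2^d)))" .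
  have Z: "(\<lambda>x. \<lambda>i\<in>?I. V i x) \<in> measurable M (Pi\<^sub>M ?I (\<lambda>_. borel))"
    using rv by (intro measurable_restrict) auto
  have E: "ext_dom d \<in> borel_measurable (Pi\<^sub>M ?I (\<lambda>_. borel))" by (rule ext_dom_meas) simp
  have eq: "(\<lambda>\<omega> k. dyad_incr X d \<omega> (\<pi> k)) = ext_dom d \<circ> (\<lambda>x. \<lambda>i\<in>?I. V i x)"
  proof (intro ext)
    fix \<omega> k
    show "dyad_incr X d \<omega> (\<pi> k) = (ext_dom d \<circ> (\<lambda>x. \<lambda>i\<in>?I. V i x)) \<omega> k"
    proof (cases "k \<in> ?I")
      case True then have "\<pi> k \<in> ?I" using pin by blast
      with True show ?thesis by (simp add: ext_dom_def V_def dyad_incr_def dinc_def)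
    next
      case False then have "\<pi> k \<notin> ?I" using pin by blast
      with False show ?thesis unfolding ext_dom_def V_def dyad_incr_def comp_def by presburger
    qed
  qed
  show "(\<lambda>\<omega> k. dyad_incr X d \<omega> (\<pi> k)) \<in> borel_measurable M"
    unfolding eq using E Z by (rule measurable_comp[rotated])
  show "distr M borel (\<lambda>\<omega> k. dyad_incr X d \<omega> (\<pi> k)) =
       distr (Pi\<^sub>M {1..(2::nat)^d} (\<lambda>_. distr M borel (X (1 / 2^d)))) borel (ext_dom d)"
    unfolding eq distr_distr[OF E Z, symmetric] D' ..
qed


lemma perm_refine:
  assumes de: "d \<le> e" and gg: "g_perm d \<pi>d = g_perm e \<pi>e"
    and \<pi>d: "\<pi>d permutes {1..(2::nat)^d}"
    and k: "k \<in> {1..(2::nat)^d}" and j: "j < 2^(e-d)"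
  shows "\<pi>e ((k-1)*2^(e-d) + Suc j) = (\<pi>d k - 1)*2^(e-d) + Suc j"
proof -
  define m where "m = e - d"
  have em: "e = d + m" using de m_def by simp
  define i where "i = (k-1)*2^m + Suc j"
  define Q :: real where "Q = 2^m"
  define D :: real where "D = 2^d"
  have Q0: "Q > 0" "D > 0" by (simp_all add: Q_def D_def)
  have E: "(2::real)^e = D * Q" by (simp add: em power_add D_def Q_def)
  have pk: "\<pi>d k \<in> {1..2^d}" using permutes_in_image[OF \<pi>d] k by simp
  have k1: "k \<ge> 1" "real k \<le> D" using k by (auto simp: D_def)
  have jQ: "real j + 1 \<le> Q" using j unfolding Q_def m_def
    by (metis Suc_leI of_nat_Suc of_nat_le_iff of_nat_numeral of_nat_power add.commute)
  have ri: "real i = (real k - 1) * Q + real j + 1" using k1 by (simp add: i_def Q_def of_nat_diff)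
  define t where "t = real i / (2::real)^e"
  have ti: "t * 2^e = real i" using Q0 by (simp add: t_def E)
  have td: "t * 2^d = real i / Q" using Q0 by (simp add: t_def E D_def[symmetric] field_simps)
  have i1: "real i \<ge> 1" by (simp add: i_def)
  have iDQ: "real i \<le> D * Q"
  proof -
    have "real i \<le> (real k - 1) * Q + Q" using ri jQ by simp
    also have "\<dots> = real k * Q" by (simp add: algebra_simps)
    also have "\<dots> \<le> D * Q" using k1 Q0 by simp
    finally show ?thesis .
  qed
  have tpos: "t \<in> {0<..1}" using i1 iDQ Q0 by (auto simp: t_def E field_simps)
  have ce: "nat \<lceil>t * 2^e\<rceil> = i" using ti by simp
  have cd: "nat \<lceil>t * 2^d\<rceil> = k"
  proof -
    have "real k - 1 < real i / Q" using ri Q0 by (simp add: field_simps)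
    moreover have "real i / Q \<le> real k" using ri jQ Q0 by (simp add: field_simps)
    ultimately have "\<lceil>real i / Q\<rceil> = int k" by (simp add: ceiling_eq_iff)
    then show ?thesis using td by simp
  qed
  have "g_perm d \<pi>d t = g_perm e \<pi>e t" using gg by simp
  then have "real (\<pi>d k) / 2^d - (real k / 2^d - t) = real (\<pi>e i) / 2^e - (real i / 2^e - t)"
    using tpos by (simp add: g_perm_def ce cd Let_def)
  then have H: "D * real i + D * (Q * real (\<pi>d k)) = D * real (\<pi>e i) + D * (Q * real k)"
    using Q0 by (simp add: E D_def[symmetric] field_simps)
  then have "D * (real (\<pi>e i) + Q * real k - real i - Q * real (\<pi>d k)) = 0" by (simp add: algebra_simps)
  then have "real (\<pi>e i) + Q * real k - real i - Q * real (\<pi>d k) = 0" using Q0 by simp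
  then have "real (\<pi>e i) = (real (\<pi>d k) - real k) * Q + real i" by (simp add: algebra_simps)
  also have "\<dots> = real ((\<pi>d k - 1) * 2^m + Suc j)"
  proof -
    have pk1: "1 \<le> \<pi>d k" using pk by simp
    have "real ((\<pi>d k - 1) * 2^m + Suc j) = (real (\<pi>d k) - 1) * Q + real j + 1"
      unfolding of_nat_add of_nat_mult of_nat_diff[OF pk1] by (simp add: Q_def)
    then show ?thesis using ri by (simp add: algebra_simps)
  qed
  finally have "\<pi>e i = (\<pi>d k - 1) * 2^m + Suc j" by (simp only: of_nat_eq_iff)
  then show ?thesis by (simp add: i_def m_def)
qed


definition blk :: "nat \<Rightarrow> nat \<Rightarrow> (nat \<Rightarrow> real) \<Rightarrow> nat \<Rightarrow> real" where
  "blk d m y = (\<lambda>k. if k \<in> {1..(2::nat)^d} then (\<Sum>i<(2::nat)^m. y ((k-1)*2^m + Suc i)) else 0)"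

lemma blk_incr:
  assumes de: "d \<le> e"
  shows "blk d (e-d) (dyad_incr X e \<omega>) = dyad_incr X d \<omega>"
proof
  fix k
  define m where "m = e - d"
  have em: "e = d + m" using de m_def by simp
  show "blk d (e-d) (dyad_incr X e \<omega>) k = dyad_incr X d \<omega> k"
  proof (cases "k \<in> {1..(2::nat)^d}")
    case False then show ?thesis by (auto simp: blk_def dyad_incr_def)
  next
    case True
    define a where "a n = X (real ((k-1)*2^m + n) / 2^e) \<omega>" for n
    have idx: "(k-1)*2^m + Suc i \<in> {1..(2::nat)^e}" if "i < 2^m" for i
    proof -
      have "(k-1)*2^m + Suc i \<le> (k-1)*2^m + 2^m" using that by simp
      also have "\<dots> = k * 2^m" using True by (cases k) auto
      also have "\<dots> \<le> 2^d * 2^m" using True by simp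
      finally show ?thesis by (simp add: em power_add)
    qed
    have "blk d m (dyad_incr X e \<omega>) k = (\<Sum>i<(2::nat)^m. a (Suc i) - a i)"
      using True idx by (auto simp: blk_def dyad_incr_def a_def intro!: sum.cong)
    also have "\<dots> = a (2^m) - a 0" by (rule sum_lessThan_telescope)
    also have "\<dots> = dyad_incr X d \<omega> k"
    proof -
      have k1: "k \<ge> 1" using True by simp
      have "real ((k-1)*2^m + 2^m) / (2::real)^e = real k / 2^d"
        using k1 by (simp add: em power_add of_nat_diff field_simps)
      moreover have "real ((k-1)*2^m + 0) / (2::real)^e = (real k - 1) / 2^d"
        using k1 by (simp add: em power_add of_nat_diff field_simps)
      ultimately show ?thesis using True by (simp add: a_def dyad_incr_def)
    qed
    finally show ?thesis by (simp add: m_def)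
  qed
qed

lemma blk_perm:
  assumes de: "d \<le> e" and gg: "g_perm d \<pi>d = g_perm e \<pi>e"
    and \<pi>d: "\<pi>d permutes {1..(2::nat)^d}"
  shows "blk d (e-d) (\<lambda>k. y (\<pi>e k)) = (\<lambda>k. blk d (e-d) y (\<pi>d k))"
proof
  fix k
  show "blk d (e-d) (\<lambda>k. y (\<pi>e k)) k = blk d (e-d) y (\<pi>d k)"
  proof (cases "k \<in> {1..(2::nat)^d}")
    case False
    then have "\<pi>d k = k" using permutes_not_in[OF \<pi>d] by blast
    with False show ?thesis by (auto simp: blk_def)
  next
    case True
    then have pk: "\<pi>d k \<in> {1..(2::nat)^d}" using permutes_in_image[OF \<pi>d] by blast
    show ?thesis using True pk perm_refine[OF de gg \<pi>d True]
      unfolding blk_def by (auto intro!: sum.cong)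
  qed
qed

lemma blk_cont: "continuous_on UNIV (blk d m)"
proof (rule continuous_on_coordinatewise_then_product)
  fix i
  show "continuous_on UNIV (\<lambda>x. blk d m x i)"
  proof (cases "i \<in> {1..(2::nat)^d}")
    case True
    then show ?thesis unfolding blk_def
      by (simp only: if_True) (intro continuous_intros continuous_on_product_coordinates)
  next
    case False
    then show ?thesis unfolding blk_def by (simp only: if_False continuous_on_const)
  qed
qed

lemma blk_in: "blk d m y \<in> dyad_dom d"
  by (simp add: blk_def dyad_dom_def)


lemma ext_cont: "continuous_on UNIV (ext_dom d)"
proof (rule continuous_on_coordinatewise_then_product)
  fix i
  show "continuous_on UNIV (\<lambda>x. ext_dom d x i)"
  proof (cases "i \<in> {1..(2::nat)^d}")
    case True
    then show ?thesis unfolding ext_dom_def by (simp only: if_True continuous_on_product_coordinates)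
  next
    case False
    then show ?thesis unfolding ext_dom_def by (simp only: if_False continuous_on_const)
  qed
qed

lemma ext_in: "ext_dom d x \<in> dyad_dom d"
  by (simp add: ext_dom_def dyad_dom_def)

lemma ext_id: "x \<in> dyad_dom d \<Longrightarrow> ext_dom d x = x"
  by (auto simp: ext_dom_def dyad_dom_def fun_eq_iff)

lemma bcont_meas:
  assumes "bcont d f" shows "(\<lambda>x. f (ext_dom d x)) \<in> borel_measurable borel"
proof -
  have "continuous_on (dyad_dom d) f" using assms by (simp add: bcont_def)
  then have "continuous_on UNIV (\<lambda>x. f (ext_dom d x))"
    using continuous_on_compose2[OF _ ext_cont] ext_in by blast
  then show ?thesis by (rule borel_measurable_continuous_onI)
qed

lemma incr_in:
  assumes \<pi>: "\<pi> permutes {1..(2::nat)^d}"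
  shows "(\<lambda>k. dyad_incr X d \<omega> (\<pi> k)) \<in> dyad_dom d"
  using permutes_not_in[OF \<pi>] by (auto simp: dyad_dom_def dyad_incr_def)

lemma incr_in0: "dyad_incr X d \<omega> \<in> dyad_dom d"
  by (auto simp: dyad_dom_def dyad_incr_def)

lemma same_law:
  assumes levy: "levy_process M X" and \<pi>: "\<pi> permutes {1..(2::nat)^d}"
  shows "(\<lambda>\<omega> k. dyad_incr X d \<omega> (\<pi> k)) \<in> borel_measurable M"
    "dyad_incr X d \<in> borel_measurable M"
    "distr M borel (\<lambda>\<omega> k. dyad_incr X d \<omega> (\<pi> k)) = distr M borel (dyad_incr X d)"
  using dyad_law[OF levy \<pi>] dyad_law[OF levy permutes_id] by simp_all

lemma AE_transfer:
  fixes Y1 Y2 :: "'a \<Rightarrow> 'b::topological_space" and h1 h2 :: "'b \<Rightarrow> real"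
  assumes D: "distr M borel Y1 = distr M borel Y2"
    and [measurable]: "Y1 \<in> borel_measurable M" "Y2 \<in> borel_measurable M"
      "h1 \<in> borel_measurable borel" "h2 \<in> borel_measurable borel"
    and AE: "AE \<omega> in M. h1 (Y1 \<omega>) = h2 (Y1 \<omega>)"
  shows "AE \<omega> in M. h1 (Y2 \<omega>) = h2 (Y2 \<omega>)"
proof -
  have P: "{x \<in> space borel. h1 x = h2 x} \<in> sets borel" by measurable
  have "AE x in distr M borel Y1. h1 x = h2 x" using AE by (subst AE_distr_iff) (auto intro: P)
  then have "AE x in distr M borel Y2. h1 x = h2 x" unfolding D .
  then show ?thesis by (subst (asm) AE_distr_iff) (auto intro: P)
qed

theorem lemma2p4:
  fixes M :: "'a measure" and X :: "real \<Rightarrow> 'a \<Rightarrow> real" and g :: "real \<Rightarrow> real"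
  assumes levy: "levy_process M X"
    and compl: "measure_complete M"
    and g: "g \<in> G_dyad"
  shows
    \<comment> \<open>(1) well-definedness of T_g on H^{X,d}\<close>
    "(\<forall>d \<pi> f1 f2. deg g \<le> d \<longrightarrow> \<pi> permutes {1..(2::nat)^d} \<longrightarrow> g = g_perm d \<pi> \<longrightarrow>
        bcont d f1 \<longrightarrow> bcont d f2 \<longrightarrow>
        (AE \<omega> in M. f1 (dyad_incr X d \<omega>) = f2 (dyad_incr X d \<omega>)) \<longrightarrow>
        (AE \<omega> in M. f1 (\<lambda>k. dyad_incr X d \<omega> (\<pi> k)) = f2 (\<lambda>k. dyad_incr X d \<omega> (\<pi> k))))
   \<and> \<comment> \<open>(2) compatibility: T_{g_{pi_e}} restricted to H^{X,d} is T_{g_{pi_d}}\<close>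
    (\<forall>d e \<pi>d \<pi>e f f'. deg g \<le> d \<longrightarrow> d \<le> e \<longrightarrow>
        \<pi>d permutes {1..(2::nat)^d} \<longrightarrow> \<pi>e permutes {1..(2::nat)^e} \<longrightarrow>
        g = g_perm d \<pi>d \<longrightarrow> g = g_perm e \<pi>e \<longrightarrow>
        bcont d f \<longrightarrow> bcont e f' \<longrightarrow>
        (AE \<omega> in M. f (dyad_incr X d \<omega>) = f' (dyad_incr X e \<omega>)) \<longrightarrow>
        (AE \<omega> in M. f' (\<lambda>k. dyad_incr X e \<omega> (\<pi>e k)) = f (\<lambda>k. dyad_incr X d \<omega> (\<pi>d k))))
   \<and> \<comment> \<open>(3) F and T_g F have the same law; T_g is a linear isometry in L_2\<close>
    (\<forall>d \<pi> f. deg g \<le> d \<longrightarrow> \<pi> permutes {1..(2::nat)^d} \<longrightarrow> g = g_perm d \<pi> \<longrightarrow> bcont d f \<longrightarrow>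
        bcont d (\<lambda>x. f (\<lambda>k. x (\<pi> k))) \<and>
        distr M borel (\<lambda>\<omega>. f (\<lambda>k. dyad_incr X d \<omega> (\<pi> k))) = distr M borel (\<lambda>\<omega>. f (dyad_incr X d \<omega>)) \<and>
        (\<integral>\<omega>. (f (\<lambda>k. dyad_incr X d \<omega> (\<pi> k)))\<^sup>2 \<partial>M) = (\<integral>\<omega>. (f (dyad_incr X d \<omega>))\<^sup>2 \<partial>M))"
proof (intro conjI allI impI)
  fix d \<pi> f1 f2
  assume \<pi>: "\<pi> permutes {1..(2::nat)^d}" and b1: "bcont d f1" and b2: "bcont d f2"
    and AE: "AE \<omega> in M. f1 (dyad_incr X d \<omega>) = f2 (dyad_incr X d \<omega>)"
  note L = same_law[OF levy \<pi>]
  have "AE \<omega> in M. f1 (ext_dom d (dyad_incr X d \<omega>)) = f2 (ext_dom d (dyad_incr X d \<omega>))"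
    using AE by (simp add: ext_id[OF incr_in0])
  then have "AE \<omega> in M. f1 (ext_dom d (dyad_incr X d \<omega> \<circ> \<pi>)) = f2 (ext_dom d (dyad_incr X d \<omega> \<circ> \<pi>))"
    using AE_transfer[OF L(3)[symmetric] L(2) L(1) bcont_meas[OF b1] bcont_meas[OF b2]]
    by (simp add: comp_def)
  then show "AE \<omega> in M. f1 (\<lambda>k. dyad_incr X d \<omega> (\<pi> k)) = f2 (\<lambda>k. dyad_incr X d \<omega> (\<pi> k))"
    by (simp add: comp_def ext_id[OF incr_in[OF \<pi>]])
next
  fix d e \<pi>d \<pi>e f f'
  assume de: "d \<le> e" and \<pi>d: "\<pi>d permutes {1..(2::nat)^d}" and \<pi>e: "\<pi>e permutes {1..(2::nat)^e}"
    and gd: "g = g_perm d \<pi>d" and ge: "g = g_perm e \<pi>e" and bf: "bcont d f" and bf': "bcont e f'"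
    and AE: "AE \<omega> in M. f (dyad_incr X d \<omega>) = f' (dyad_incr X e \<omega>)"
  have gg: "g_perm d \<pi>d = g_perm e \<pi>e" using gd ge by simp
  note L = same_law[OF levy \<pi>e]
  define h1 where "h1 y = f (blk d (e-d) y)" for y
  define h2 where "h2 y = f' (ext_dom e y)" for y
  have m1: "h1 \<in> borel_measurable borel"
  proof -
    have "continuous_on (dyad_dom d) f" using bf by (simp add: bcont_def)
    then have "continuous_on UNIV h1"
      unfolding h1_def using continuous_on_compose2[OF _ blk_cont] blk_in by blast
    then show ?thesis by (rule borel_measurable_continuous_onI)
  qed
  have m2: "h2 \<in> borel_measurable borel" unfolding h2_def by (rule bcont_meas[OF bf'])
  have "AE \<omega> in M. h1 (dyad_incr X e \<omega>) = h2 (dyad_incr X e \<omega>)"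
    using AE by (simp add: h1_def h2_def blk_incr[OF de] ext_id[OF incr_in0])
  then have "AE \<omega> in M. h1 (dyad_incr X e \<omega> \<circ> \<pi>e) = h2 (dyad_incr X e \<omega> \<circ> \<pi>e)"
    using AE_transfer[OF L(3)[symmetric] L(2) L(1) m1 m2] by (simp add: comp_def)
  moreover have "h1 (dyad_incr X e \<omega> \<circ> \<pi>e) = f (\<lambda>k. dyad_incr X d \<omega> (\<pi>d k))" for \<omega>
    unfolding h1_def comp_def blk_perm[OF de gg \<pi>d] blk_incr[OF de] ..
  moreover have "h2 (dyad_incr X e \<omega> \<circ> \<pi>e) = f' (\<lambda>k. dyad_incr X e \<omega> (\<pi>e k))" for \<omega>
    unfolding h2_def comp_def using ext_id[OF incr_in[OF \<pi>e]] by metis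
  ultimately show "AE \<omega> in M. f' (\<lambda>k. dyad_incr X e \<omega> (\<pi>e k)) = f (\<lambda>k. dyad_incr X d \<omega> (\<pi>d k))"
    by (auto elim: AE_mp)
next
  fix d \<pi> f
  assume \<pi>: "\<pi> permutes {1..(2::nat)^d}" and bf: "bcont d f"
  note L = same_law[OF levy \<pi>]
  have fc: "continuous_on (dyad_dom d) f" and fb: "bounded (f ` dyad_dom d)" using bf by (simp_all add: bcont_def)
  have pin: "(\<lambda>k. x (\<pi> k)) \<in> dyad_dom d" if "x \<in> dyad_dom d" for x
    using that permutes_not_in[OF \<pi>] by (auto simp: dyad_dom_def)
  have pc: "continuous_on (dyad_dom d) (\<lambda>x k. x (\<pi> k))"
    by (intro continuous_on_coordinatewise_then_product continuous_on_subset[OF continuous_on_product_coordinates]) simp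
  show "bcont d (\<lambda>x. f (\<lambda>k. x (\<pi> k)))"
    unfolding bcont_def
  proof
    show "continuous_on (dyad_dom d) (\<lambda>x. f (\<lambda>k. x (\<pi> k)))"
      using continuous_on_compose2[OF fc pc] pin by blast
    have "(\<lambda>x. f (\<lambda>k. x (\<pi> k))) ` dyad_dom d \<subseteq> f ` dyad_dom d" using pin by auto
    then show "bounded ((\<lambda>x. f (\<lambda>k. x (\<pi> k))) ` dyad_dom d)" using fb bounded_subset by blast
  qed
  define h where "h y = f (ext_dom d y)" for y
  have mh: "h \<in> borel_measurable borel" unfolding h_def by (rule bcont_meas[OF bf])
  have e1: "(\<lambda>\<omega>. f (\<lambda>k. dyad_incr X d \<omega> (\<pi> k))) = h \<circ> (\<lambda>\<omega> k. dyad_incr X d \<omega> (\<pi> k))"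
    by (simp add: h_def comp_def ext_id[OF incr_in[OF \<pi>]])
  have e2: "(\<lambda>\<omega>. f (dyad_incr X d \<omega>)) = h \<circ> dyad_incr X d"
    by (simp add: h_def comp_def ext_id[OF incr_in0])
  show "distr M borel (\<lambda>\<omega>. f (\<lambda>k. dyad_incr X d \<omega> (\<pi> k))) = distr M borel (\<lambda>\<omega>. f (dyad_incr X d \<omega>))"
    unfolding e1 e2 distr_distr[OF mh L(1), symmetric] distr_distr[OF mh L(2), symmetric] L(3) ..
  have mh2: "(\<lambda>y. (h y)\<^sup>2) \<in> borel_measurable borel" using mh by measurable
  have "(\<integral>\<omega>. (f (\<lambda>k. dyad_incr X d \<omega> (\<pi> k)))\<^sup>2 \<partial>M) = (\<integral>y. (h y)\<^sup>2 \<partial>distr M borel (\<lambda>\<omega> k. dyad_incr X d \<omega> (\<pi> k)))"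
    using integral_distr[OF L(1) mh2] e1 by (simp add: fun_eq_iff)
  also have "\<dots> = (\<integral>y. (h y)\<^sup>2 \<partial>distr M borel (dyad_incr X d))" unfolding L(3) ..
  also have "\<dots> = (\<integral>\<omega>. (f (dyad_incr X d \<omega>))\<^sup>2 \<partial>M)"
    using integral_distr[OF L(2) mh2] e2 by (simp add: fun_eq_iff)
  finally show "(\<integral>\<omega>. (f (\<lambda>k. dyad_incr X d \<omega> (\<pi> k)))\<^sup>2 \<partial>M) = (\<integral>\<omega>. (f (dyad_incr X d \<omega>))\<^sup>2 \<partial>M)" .
qed

end
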